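(* For every word $\omega\in[n]^*$, $B_\omega=\mathrm{Comp}_0(X_\omega)$, where \[X_\omega=\bigcap_{i=1}^n\{x\in\mathbb{Z}^n: 0\le e_i^T M_\omega x\le e_i^T u_\omega\}.\]
   Context: Let $[n]=\{1,\dots,n\}$, $e_1,\dots,e_n$ the standard basis of $\mathbb{Z}^n$; $\varepsilon$ is the empty word, $*$ concatenation. For words $\omega$ over $[n]$ define recursively $\delta^i_\omega\in\mathbb{Z}^n$: $\delta^i_\varepsilon=e_i$; $\delta^j_{\omega*j}=\delta^j_\omega$, $\delta^i_{\omega*j}=\delta^i_\omega-\delta^j_\omega$ for $i\ne j$. Let $B_\varepsilon=\{0\}$, $B_{\omega*j}=B_\omega+\{0,\delta^j_\omega\}$ (Minkowski sum). Let $M_\omega=(\delta^1_\omega\ \cdots\ \delta^n_\omega)^{-1}$ (inverse of the matrix with columns $\delta^i_\omega$). For $k\in[n]$ let $D^k=\mathrm{id}+e_k(\mathbb{1}-e_k)^T$ with $\mathbb{1}=(1,\dots,1)^T$. Define $u_\varepsilon=0$, $u_{\omega*j}=e_j+D^j u_\omega$. A subset of $\mathbb{Z}^n$ is regarded as a graph by joining two elements iff their Euclidean distance is $1$; for $X\subseteq\mathbb{Z}^n$, $\mathrm{Comp}_0(X)$ denotes the connected component of $X$ containing $0$. *)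

theory Defs
  imports "HOL-Analysis.Analysis"
begin

text \<open>The index set [n] is a finite type 'n (n = CARD('n)); words over [n] are lists
  of elements of 'n, with the last letter of a word being the last list element.
  Vectors in Z^n are int^'n.  The recursive definitions (which peel off the LAST
  letter of a word) are given on the reversed word.\<close>

definition unitv :: "'n::finite \<Rightarrow> int ^ 'n" where
  "unitv i = axis i 1"

primrec deltaR :: "'n::finite list \<Rightarrow> 'n \<Rightarrow> int ^ 'n" where
  "deltaR [] i = unitv i"
| "deltaR (j # r) i = (if i = j then deltaR r j else deltaR r i - deltaR r j)"

definition delta :: "'n::finite list \<Rightarrow> 'n \<Rightarrow> int ^ 'n" where
  "delta w i = deltaR (rev w) i"

primrec BR :: "'n::finite list \<Rightarrow> (int ^ 'n) set" where
  "BR [] = {0}"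
| "BR (j # r) = {a + b | a b. a \<in> BR r \<and> b \<in> {0, deltaR r j}}"

definition Bw :: "'n::finite list \<Rightarrow> (int ^ 'n) set" where
  "Bw w = BR (rev w)"

definition Mw :: "'n::finite list \<Rightarrow> real ^ 'n ^ 'n" where
  "Mw w = matrix_inv (\<chi> a b. real_of_int (delta w b $ a))"

definition Dmat :: "'n::finite \<Rightarrow> int ^ 'n ^ 'n" where
  "Dmat k = mat 1 + (\<chi> a b. unitv k $ a * (vec 1 - unitv k) $ b)"

primrec uR :: "'n::finite list \<Rightarrow> int ^ 'n" where
  "uR [] = 0"
| "uR (j # r) = unitv j + Dmat j *v uR r"

definition uw :: "'n::finite list \<Rightarrow> int ^ 'n" where
  "uw w = uR (rev w)"

definition to_real :: "int ^ 'n::finite \<Rightarrow> real ^ 'n" where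
  "to_real x = (\<chi> k. real_of_int (x $ k))"

definition Xw :: "'n::finite list \<Rightarrow> (int ^ 'n) set" where
  "Xw w = {x. \<forall>i. 0 \<le> (Mw w *v to_real x) $ i \<and> (Mw w *v to_real x) $ i \<le> real_of_int (uw w $ i)}"

text \<open>Lattice graph: two points are adjacent iff their Euclidean distance is 1.\<close>
definition adjacent :: "int ^ 'n::finite \<Rightarrow> int ^ 'n \<Rightarrow> bool" where
  "adjacent x y \<longleftrightarrow> dist (to_real x) (to_real y) = 1"

text \<open>Connected component of 0 in the induced subgraph on X (empty if 0 \<notin> X).\<close>
definition Comp0 :: "(int ^ 'n::finite) set \<Rightarrow> (int ^ 'n) set" where
  "Comp0 X = {y. 0 \<in> X \<and> (\<lambda>a b. a \<in> X \<and> b \<in> X \<and> adjacent a b)\<^sup>*\<^sup>* 0 y}"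

end

theory Submission
  imports Defs
begin


definition sg :: "'n \<Rightarrow> 'n list \<Rightarrow> 'n list" where
  "sg j l = concat (map (\<lambda>i. if i = j then [j] else [i, j]) l)"

lemma sg_Nil[simp]: "sg j [] = []" by (simp add: sg_def)
lemma sg_Cons[simp]: "sg j (a # l) = (if a = j then [j] else [a, j]) @ sg j l" by (simp add: sg_def)
lemma sg_append[simp]: "sg j (l1 @ l2) = sg j l1 @ sg j l2" by (simp add: sg_def)
lemma sg_replicate: "sg j (concat (replicate m W)) = concat (replicate m (sg j W))"
  by (induction m) auto
lemma sg_ends: "l \<noteq> [] \<Longrightarrow> \<exists>z. sg j l = z @ [j]"
proof (induction l rule: rev_induct)
  case (snoc x xs)
  have "sg j (xs @ [x]) = (sg j xs @ (if x = j then [] else [x])) @ [j]" by simp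
  then show ?case by blast
qed simp

primrec cw :: "'n::finite list \<Rightarrow> 'n list" where
  "cw [] = []"
| "cw (j # r) = j # sg j (cw r)"

primrec ww :: "'n::finite list \<Rightarrow> 'n \<Rightarrow> 'n list" where
  "ww [] k = [k]"
| "ww (j # r) k = sg j (ww r k)"

lemma ww_ne: "ww r k \<noteq> []"
proof (induction r)
  case (Cons j r)
  have "\<exists>z. sg j (ww r k) = z @ [j]" by (rule sg_ends[OF Cons.IH])
  then show ?case by auto
qed simp

lemma cw_snoc: "cw (r @ [k]) = cw r @ ww r k"
  by (induction r) auto

lemma ww_snoc: "ww (r @ [k]) i = (if i = k then ww r k else ww r i @ ww r k)"
  by (induction r) auto

definition par :: "'n::finite list \<Rightarrow> int ^ 'n" where
  "par l = sum_list (map unitv l)"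

lemma par_Nil[simp]: "par [] = 0" by (simp add: par_def)
lemma par_Cons[simp]: "par (a # l) = unitv a + par l" by (simp add: par_def)
lemma par_append[simp]: "par (l1 @ l2) = par l1 + par l2" by (simp add: par_def)

lemma unitv_nth: "unitv a $ i = (if i = a then 1 else 0)"
  by (simp add: unitv_def axis_def)

definition nu :: "int ^ 'n::finite \<Rightarrow> int" where
  "nu y = (\<Sum>i\<in>UNIV. y $ i)"

lemma nu_add[simp]: "nu (x + y) = nu x + nu y" by (simp add: nu_def sum.distrib)
lemma nu_diff[simp]: "nu (x - y) = nu x - nu y" by (simp add: nu_def sum_subtractf)
lemma nu_0[simp]: "nu 0 = 0" by (simp add: nu_def)
lemma nu_unitv[simp]: "nu (unitv a) = 1" by (simp add: nu_def unitv_nth)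
lemma nu_par[simp]: "nu (par l) = int (length l)" by (induction l) auto

lemma par_nonneg: "0 \<le> par l $ i"
  by (induction l) (auto simp: unitv_nth)

lemma nu_nonneg: "(\<And>i. 0 \<le> y $ i) \<Longrightarrow> 0 \<le> nu y"
  by (simp add: nu_def sum_nonneg)

lemma nu_mono: "(\<And>i. x $ i \<le> y $ i) \<Longrightarrow> nu x \<le> nu y"
  by (simp add: nu_def sum_mono)

lemma Dmat_mult: "Dmat j *v y = (\<chi> i. if i = j then nu y else y $ i)"
proof -
  have "(Dmat j *v y) $ i = (if i = j then nu y else y $ i)" for i
  proof -
    have "(Dmat j *v y) $ i = y $ i + (\<Sum>b\<in>UNIV. unitv j $ i * (1 - unitv j $ b) * y $ b)"
    proof -
      have "(Dmat j *v y) $ i = (mat 1 *v y) $ i + ((\<chi> a b. unitv j $ a * (vec 1 - unitv j) $ b) *v y) $ i"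
        by (simp add: Dmat_def matrix_vector_mult_add_rdistrib)
      also have "(mat 1 *v y) $ i = y $ i" by simp
      also have "((\<chi> a b. unitv j $ a * (vec 1 - unitv j) $ b) *v y) $ i = (\<Sum>b\<in>UNIV. unitv j $ i * (1 - unitv j $ b) * y $ b)"
        by (simp add: matrix_vector_mult_def mult.assoc)
      finally show ?thesis .
    qed
    also have "\<dots> = (if i = j then nu y else y $ i)"
    proof (cases "i = j")
      case True
      have "(\<Sum>b\<in>UNIV. (1 - unitv j $ b) * y $ b) = (\<Sum>b\<in>UNIV. y $ b) - (\<Sum>b\<in>UNIV. unitv j $ b * y $ b)"
        by (simp add: algebra_simps sum_subtractf)
      also have "(\<Sum>b\<in>UNIV. unitv j $ b * y $ b) = y $ j"
      proof -
        have "(\<Sum>b\<in>UNIV. unitv j $ b * y $ b) = (\<Sum>b\<in>UNIV. if b = j then y $ b else 0)"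
          by (rule sum.cong) (auto simp: unitv_nth)
        then show ?thesis by simp
      qed
      finally show ?thesis using True by (simp add: unitv_nth nu_def)
    qed (simp add: unitv_nth)
    finally show ?thesis .
  qed
  then show ?thesis by (simp add: vec_eq_iff)
qed

lemma par_sg: "par (sg j l) = Dmat j *v par l"
proof (induction l)
  case Nil then show ?case by simp
next
  case (Cons a l)
  have "Dmat j *v unitv a = (if a = j then unitv j else unitv a + unitv j)"
    by (auto simp: Dmat_mult vec_eq_iff unitv_nth)
  with Cons show ?case by (simp add: matrix_vector_right_distrib)
qed

lemma par_cw: "par (cw r) = uR r"
  by (induction r) (auto simp: par_sg)

primrec Mi :: "'n::finite list \<Rightarrow> int ^ 'n ^ 'n" where
  "Mi [] = mat 1"
| "Mi (j # r) = Dmat j ** Mi r"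

lemma par_ww: "par (ww r k) = Mi r *v unitv k"
  by (induction r) (auto simp: par_sg matrix_vector_mul_assoc)



definition lin :: "'n::finite list \<Rightarrow> int ^ 'n \<Rightarrow> int ^ 'n" where
  "lin r y = (\<Sum>b\<in>UNIV. y $ b *s deltaR r b)"

lemma lin_nth: "lin r y $ a = (\<Sum>b\<in>UNIV. y $ b * deltaR r b $ a)"
  by (simp add: lin_def)

lemma lin_add[simp]: "lin r (x + y) = lin r x + lin r y"
  by (simp add: vec_eq_iff lin_nth algebra_simps sum.distrib)
lemma lin_diff[simp]: "lin r (x - y) = lin r x - lin r y"
  by (simp add: vec_eq_iff lin_nth algebra_simps sum_subtractf)
lemma lin_smult[simp]: "lin r (c *s y) = c *s lin r y"
  by (simp add: vec_eq_iff lin_nth algebra_simps sum_distrib_left)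
lemma lin_0[simp]: "lin r 0 = 0"
  by (simp add: vec_eq_iff lin_nth)
lemma lin_unitv[simp]: "lin r (unitv a) = deltaR r a"
proof -
  have "lin r (unitv a) $ i = deltaR r a $ i" for i
  proof -
    have "lin r (unitv a) $ i = (\<Sum>b\<in>UNIV. if b = a then deltaR r b $ i else 0)"
      unfolding lin_nth by (rule sum.cong) (auto simp: unitv_nth)
    then show ?thesis by simp
  qed
  then show ?thesis by (simp add: vec_eq_iff)
qed

lemma sum_if_mult[simp]: "(\<Sum>i\<in>(UNIV::'n::finite set). (c::int) * (if i = j then 1 else 0)) = c"
proof -
  have "(\<Sum>i\<in>(UNIV::'n set). c * (if i = j then 1 else 0)) = (\<Sum>i\<in>UNIV. if i = j then c else 0)"
    by (rule sum.cong) auto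
  then show ?thesis by simp
qed

lemma sum_if_not: "(\<Sum>b\<in>(UNIV::'n::finite set). if b = j then 0 else (f b::int)) = (\<Sum>b\<in>UNIV. f b) - f j"
proof -
  have "(\<Sum>b\<in>(UNIV::'n set). if b = j then 0 else f b) = (\<Sum>b\<in>UNIV. f b - (if b = j then f b else 0))"
    by (rule sum.cong) auto
  then show ?thesis by (simp add: sum_subtractf)
qed

lemma lin_cons: "lin (j # r) z = lin r z - (nu z - z $ j) *s deltaR r j"
proof -
  have "lin (j # r) z $ a = lin r z $ a - (nu z - z $ j) * deltaR r j $ a" for a
  proof -
    have "lin (j # r) z $ a = (\<Sum>b\<in>UNIV. z $ b * deltaR r b $ a - (if b = j then 0 else z $ b * deltaR r j $ a))"
      unfolding lin_nth by (rule sum.cong) (auto simp: algebra_simps)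
    also have "\<dots> = lin r z $ a - (\<Sum>b\<in>UNIV. if b = j then 0 else z $ b * deltaR r j $ a)"
      by (simp add: sum_subtractf lin_nth)
    also have "(\<Sum>b\<in>UNIV. if b = j then 0 else z $ b * deltaR r j $ a) = (nu z - z $ j) * deltaR r j $ a"
      by (simp add: sum_if_not nu_def sum_distrib_right algebra_simps)
    finally show ?thesis .
  qed
  then show ?thesis by (simp add: vec_eq_iff algebra_simps)
qed

lemma nu_smult_unitv[simp]: "nu (c *s unitv j) = c"
  by (simp add: nu_def unitv_nth)

lemma Dmat_alt: "Dmat j *v y = y + (nu y - y $ j) *s unitv j"
  by (auto simp: Dmat_mult vec_eq_iff unitv_nth)

lemma lin_Dmat: "lin (j # r) (Dmat j *v y) = lin r y"
proof -
  have nz: "nu (Dmat j *v y) - (Dmat j *v y) $ j = nu y - y $ j"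
    by (simp add: Dmat_alt unitv_nth)
  show ?thesis
    unfolding lin_cons nz by (simp add: Dmat_alt)
qed

lemma lin_Mi: "lin r (Mi r *v x) = x"
proof (induction r)
  case Nil
  have "lin [] x = x"
  proof -
    have "lin [] x $ a = x $ a" for a
    proof -
      have "lin [] x $ a = (\<Sum>b\<in>UNIV. if b = a then x $ b else 0)"
        unfolding lin_nth by (rule sum.cong) (auto simp: unitv_nth)
      then show ?thesis by simp
    qed
    then show ?thesis by (simp add: vec_eq_iff)
  qed
  then show ?case by simp
next
  case (Cons j r)
  then show ?case by (simp add: matrix_vector_mul_assoc[symmetric] lin_Dmat)
qed

lemma Mi_lin: "Mi r *v lin r y = y"
proof (induction r arbitrary: y)
  case Nil
  have "lin [] y = y"
    using lin_Mi[of "[]" y] by simp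
  then show ?case by simp
next
  case (Cons j r)
  define y0 where "y0 = y - (nu y - y $ j) *s unitv j"
  have "nu y0 - y0 $ j = nu y - y $ j"
    by (simp add: y0_def unitv_nth)
  then have "Dmat j *v y0 = y"
    by (simp add: Dmat_alt y0_def)
  then have "lin (j # r) y = lin r y0" using lin_Dmat by metis
  then show ?case using Cons \<open>Dmat j *v y0 = y\<close>
    by (simp add: matrix_vector_mul_assoc[symmetric])
qed

definition DD :: "'n::finite list \<Rightarrow> int ^ 'n ^ 'n" where
  "DD r = (\<chi> a b. deltaR r b $ a)"

lemma DD_mult: "DD r *v y = lin r y"
  by (simp add: vec_eq_iff DD_def matrix_vector_mult_def lin_nth mult.commute)

lemma DD_Mi: "DD r ** Mi r = mat 1"
  by (simp add: matrix_eq matrix_vector_mul_assoc[symmetric] DD_mult lin_Mi)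

lemma Mi_DD: "Mi r ** DD r = mat 1"
  by (simp add: matrix_eq matrix_vector_mul_assoc[symmetric] DD_mult Mi_lin)

definition RM :: "int ^ 'n::finite ^ 'm::finite \<Rightarrow> real ^ 'n ^ 'm" where
  "RM A = (\<chi> a b. real_of_int (A $ a $ b))"

lemma RM_mult: "RM (A ** B) = RM A ** RM B"
  by (simp add: vec_eq_iff RM_def matrix_matrix_mult_def)

lemma RM_1: "RM (mat 1 :: int ^ 'n::finite ^ 'n) = mat 1"
  by (simp add: vec_eq_iff RM_def mat_def)

lemma RM_vec: "RM A *v to_real x = to_real (A *v x)"
  by (simp add: vec_eq_iff RM_def to_real_def matrix_vector_mult_def)

lemma matrix_inv_eq:
  fixes A B :: "real ^ 'n::finite ^ 'n"
  assumes "A ** B = mat 1" "B ** A = mat 1"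
  shows "matrix_inv A = B"
proof -
  have ex: "\<exists>A'. A ** A' = mat 1 \<and> A' ** A = mat 1" using assms by blast
  define C where "C = matrix_inv A"
  have C: "A ** C = mat 1 \<and> C ** A = mat 1"
    unfolding C_def matrix_inv_def by (rule someI_ex[OF ex])
  have "C = C ** (A ** B)" using assms by simp
  also have "\<dots> = (C ** A) ** B" by (simp add: matrix_mul_assoc)
  also have "\<dots> = B" using C by simp
  finally show ?thesis by (simp add: C_def)
qed

lemma Mw_eq: "Mw w = RM (Mi (rev w))"
proof -
  have "(\<chi> a b. real_of_int (delta w b $ a)) = RM (DD (rev w))"
    by (simp add: RM_def DD_def delta_def)
  then show ?thesis
    unfolding Mw_def
    by (simp add: matrix_inv_eq RM_mult[symmetric] DD_Mi Mi_DD RM_1)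
qed

lemma Xw_eq: "Xw w = {x. \<forall>i. 0 \<le> (Mi (rev w) *v x) $ i \<and> (Mi (rev w) *v x) $ i \<le> uR (rev w) $ i}"
proof -
  have e: "(Mw w *v to_real x) $ i = real_of_int ((Mi (rev w) *v x) $ i)" for x i
  proof -
    have "Mw w *v to_real x = to_real (Mi (rev w) *v x)" by (simp only: Mw_eq RM_vec)
    then show ?thesis by (simp add: to_real_def)
  qed
  show ?thesis unfolding Xw_def e uw_def by simp
qed



definition PY :: "'n::finite list \<Rightarrow> (int ^ 'n) set" where
  "PY l = (\<lambda>s. par (take s l)) ` {..length l}"

lemma PY_Nil[simp]: "PY [] = {0}"
  by (simp add: PY_def)

lemma PY_snoc: "PY (l @ [a]) = insert (par (l @ [a])) (PY l)"
proof -
  have "PY (l @ [a]) = (\<lambda>s. par (take s (l @ [a]))) ` insert (Suc (length l)) {..length l}"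
    by (simp add: PY_def atMost_Suc)
  also have "\<dots> = insert (par (l @ [a])) ((\<lambda>s. par (take s (l @ [a]))) ` {..length l})"
    by simp
  also have "(\<lambda>s. par (take s (l @ [a]))) ` {..length l} = PY l"
    unfolding PY_def by (rule image_cong) auto
  finally show ?thesis .
qed

lemma PY_Cons: "PY (a # l) = insert 0 ((+) (unitv a) ` PY l)"
proof -
  have "PY (a # l) = (\<lambda>s. par (take s (a # l))) ` insert 0 (Suc ` {..length l})"
    by (simp add: PY_def atMost_Suc_eq_insert_0)
  also have "\<dots> = insert 0 ((+) (unitv a) ` PY l)"
    by (simp add: PY_def image_image)
  finally show ?thesis .
qed

lemma par_in_PY: "par l \<in> PY l"
  unfolding PY_def by (rule image_eqI[of _ _ "length l"]) auto

lemma lin_cons_unitv: "lin (j # r) (unitv a) = (if a = j then deltaR r j else deltaR r a - deltaR r j)"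
  by simp

lemma lin_par_sg: "lin (j # r) (par (sg j c)) = lin r (par c)"
  by (simp add: par_sg lin_Dmat)

lemma set_aux1: "insert 0 S = L \<union> g ` L \<Longrightarrow> x \<in> insert 0 S \<Longrightarrow>
   insert 0 (insert (g x) S) = insert x L \<union> g ` insert x L"
  by blast

lemma set_aux2: "insert 0 S = L \<union> g ` L \<Longrightarrow>
   insert 0 (insert (g x) (insert x S)) = insert x L \<union> g ` insert x L"
  by blast

lemma key_PY:
  "insert 0 ((\<lambda>q. deltaR r j + lin (j # r) q) ` PY (sg j c)) =
     lin r ` PY c \<union> (\<lambda>x. deltaR r j + x) ` (lin r ` PY c)"
proof (induction c rule: rev_induct)
  case Nil
  then show ?case by auto
next
  case (snoc a c)
  define d where "d = deltaR r j"
  define f where "f = lin r (par c)"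
  define S where "S = (\<lambda>q. d + lin (j # r) q) ` PY (sg j c)"
  define L where "L = lin r ` PY c"
  have IH: "insert 0 S = L \<union> (\<lambda>x. d + x) ` L"
    using snoc unfolding d_def S_def L_def by simp
  have "d + lin (j # r) (par (sg j c)) \<in> (\<lambda>q. d + lin (j # r) q) ` PY (sg j c)"
    by (rule imageI[OF par_in_PY])
  then have fin: "f + d \<in> insert 0 S"
    by (simp add: lin_par_sg f_def S_def add.commute)
  have R: "lin r ` PY (c @ [a]) = insert (lin r (par (c @ [a]))) L"
    by (simp add: PY_snoc L_def)
  show ?case
  proof (cases "a = j")
    case True
    have "sg j (c @ [a]) = sg j c @ [j]" using True by simp
    then have "PY (sg j (c @ [a])) = insert (par (sg j c) + unitv j) (PY (sg j c))"
      by (simp add: PY_snoc)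
    moreover have "d + lin (j # r) (par (sg j c) + unitv j) = d + (f + d)"
      by (simp add: lin_par_sg f_def d_def add.commute add.left_commute)
    moreover have "lin r (par (c @ [a])) = f + d" using True by (simp add: f_def d_def)
    ultimately have L1: "insert 0 ((\<lambda>q. d + lin (j # r) q) ` PY (sg j (c @ [a]))) = insert 0 (insert (d + (f + d)) S)"
      and R1: "lin r ` PY (c @ [a]) = insert (f + d) L"
      using R by (simp_all add: S_def)
    show ?thesis unfolding d_def[symmetric] L1 R1
      by (rule set_aux1[OF IH fin])
  next
    case False
    have e: "sg j (c @ [a]) = (sg j c @ [a]) @ [j]" using False by simp
    have "PY ((sg j c @ [a]) @ [j]) = insert (par (sg j c) + unitv a + unitv j) (insert (par (sg j c) + unitv a) (PY (sg j c)))"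
      unfolding PY_snoc[of "sg j c @ [a]"] PY_snoc[of "sg j c"] by (simp add: algebra_simps)
    then have "PY (sg j (c @ [a])) = insert (par (sg j c) + unitv a + unitv j) (insert (par (sg j c) + unitv a) (PY (sg j c)))"
      by (simp only: e)
    moreover have "d + lin (j # r) (par (sg j c) + unitv a) = f + deltaR r a"
      using False by (simp add: lin_par_sg f_def d_def)
    moreover have "d + lin (j # r) (par (sg j c) + unitv a + unitv j) = d + (f + deltaR r a)"
      using False by (simp add: lin_par_sg f_def d_def)
    moreover have "lin r (par (c @ [a])) = f + deltaR r a" by (simp add: f_def)
    ultimately have L1: "insert 0 ((\<lambda>q. d + lin (j # r) q) ` PY (sg j (c @ [a]))) = insert 0 (insert (d + (f + deltaR r a)) (insert (f + deltaR r a) S))"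
      and R1: "lin r ` PY (c @ [a]) = insert (f + deltaR r a) L"
      using R by (simp_all add: S_def)
    show ?thesis unfolding d_def[symmetric] L1 R1
      by (rule set_aux2[OF IH])
  qed
qed

lemma BR_eq: "BR r = lin r ` PY (cw r)"
proof (induction r)
  case Nil
  then show ?case by simp
next
  case (Cons j r)
  have "BR (j # r) = BR r \<union> (\<lambda>x. deltaR r j + x) ` BR r"
    by (auto simp: algebra_simps) (metis add.right_neutral)
  also have "\<dots> = insert 0 ((\<lambda>q. deltaR r j + lin (j # r) q) ` PY (sg j (cw r)))"
    unfolding Cons by (rule key_PY[symmetric])
  also have "\<dots> = lin (j # r) ` PY (cw (j # r))"
    by (simp add: PY_Cons image_image)
  finally show ?case .
qed



lemma cw_pow: "\<exists>z m. z @ cw r = concat (replicate m (ww r k))"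
proof (induction r)
  case Nil
  show ?case by (rule exI[of _ "[]"], rule exI[of _ 0]) simp
next
  case (Cons j r)
  then obtain z m where zm: "z @ cw r = concat (replicate m (ww r k))" by blast
  have sgz: "sg j z @ sg j (cw r) = concat (replicate m (ww (j # r) k))"
    using arg_cong[OF zm, of "sg j"] by (simp add: sg_replicate)
  show ?case
  proof (cases "z = []")
    case False
    from sg_ends[OF False, of j] obtain z' where "sg j z = z' @ [j]" by (elim exE)
    then have "z' @ cw (j # r) = concat (replicate m (ww (j # r) k))" using sgz by simp
    then show ?thesis by blast
  next
    case True
    from sg_ends[OF ww_ne[of r k], of j] obtain z' where z': "ww (j # r) k = z' @ [j]" by (elim exE) simp
    have "z' @ cw (j # r) = concat (replicate (Suc m) (ww (j # r) k))"
      using sgz True z' by simp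
    then show ?thesis by blast
  qed
qed

lemma pow_period:
  assumes "l = concat (replicate m W)" "i + length W < length l"
  shows "l ! i = l ! (i + length W)"
proof (cases m)
  case 0 then show ?thesis using assms by simp
next
  case (Suc m')
  define l0 where "l0 = concat (replicate m' W)"
  have l1: "l = W @ l0" using assms Suc l0_def by simp
  have l2: "l = l0 @ W" using assms Suc l0_def by (simp add: replicate_append_same[symmetric])
  have "length l = length l0 + length W" using l2 by simp
  then have "i < length l0" using assms by simp
  then have "l ! i = l0 ! i" using l2 by (simp add: nth_append)
  moreover have "l ! (i + length W) = l0 ! i" using l1 by (simp add: nth_append)
  ultimately show ?thesis by simp
qed

lemma window:
  assumes per: "\<And>i. i + p < length l \<Longrightarrow> l ! i = l ! (i + p)"
  shows "s + p \<le> length l \<Longrightarrow> par (take (s + p) l) = par (take s l) + par (take p l)"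
proof (induction s)
  case 0 then show ?case by simp
next
  case (Suc s)
  have a: "take (Suc s + p) l = take (s + p) l @ [l ! (s + p)]"
    using Suc.prems by (simp add: take_Suc_conv_app_nth)
  have b: "take (Suc s) l = take s l @ [l ! s]"
    using Suc.prems by (simp add: take_Suc_conv_app_nth)
  have "l ! s = l ! (s + p)" using per Suc.prems by simp
  then show ?case using Suc a b by (simp add: algebra_simps)
qed

lemma cw_window:
  assumes "s + length (ww r k) \<le> length (cw r)"
  shows "par (take (s + length (ww r k)) (cw r)) = par (take s (cw r)) + par (ww r k)"
proof -
  define W where "W = ww r k"
  define p where "p = length W"
  define c where "c = cw r"
  from cw_pow[of r k] obtain z m where zm: "z @ c = concat (replicate m W)"
    unfolding c_def W_def by (elim exE)
  define l where "l = z @ c"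
  have perl: "l ! i = l ! (i + p)" if "i + p < length l" for i
    using pow_period[of l m W i] zm that by (simp add: l_def p_def)
  have perc: "\<And>i. i + p < length c \<Longrightarrow> c ! i = c ! (i + p)"
  proof -
    fix i assume "i + p < length c"
    then have "l ! (length z + i) = l ! (length z + i + p)" using perl[of "length z + i"] l_def by simp
    then show "c ! i = c ! (i + p)" by (simp add: l_def nth_append add.assoc)
  qed
  have sp: "s + p \<le> length c" using assms by (simp add: p_def W_def c_def)
  have w1: "par (take (s + p) c) = par (take s c) + par (take p c)"
    using window[OF perc sp] .
  have "m \<noteq> 0"
  proof
    assume "m = 0"
    then have "c = []" using zm by simp
    then show False using sp ww_ne[of r k] by (simp add: p_def W_def)
  qed
  then obtain m' where "m = Suc m'" by (cases m) auto
  then have lW: "l = W @ concat (replicate m' W)" using zm l_def by simp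
  have "par (take (length z + p) l) = par (take (length z) l) + par (take p l)"
    using window[OF perl, of "length z"] sp l_def by simp
  moreover have "take (length z + p) l = z @ take p c" by (simp add: l_def)
  moreover have "take (length z) l = z" by (simp add: l_def)
  moreover have "take p l = W" using lW by (simp add: p_def)
  ultimately have "par (take p c) = par W" by simp
  then show ?thesis using w1 by (simp add: p_def W_def c_def)
qed



definition stp :: "'n::finite list \<Rightarrow> nat \<Rightarrow> nat \<Rightarrow> bool" where
  "stp r s t \<longleftrightarrow> s \<le> length (cw r) \<and> t \<le> length (cw r) \<and>
     (\<exists>k. t = s + length (ww r k) \<or> s = t + length (ww r k))"

lemma len_cw_snoc: "length (cw (r @ [k])) = length (cw r) + length (ww r k)"
  by (simp add: cw_snoc)

lemma len_ww_snoc: "length (ww (r @ [k]) i) = (if i = k then length (ww r k) else length (ww r i) + length (ww r k))"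
  by (simp add: ww_snoc)

lemma ww_le: "length (ww r i) \<le> length (cw r) + 1"
proof (induction r arbitrary: i rule: rev_induct)
  case Nil then show ?case by simp
next
  case (snoc k r)
  then show ?case using snoc[of k] by (auto simp: len_cw_snoc len_ww_snoc)
qed

lemma stp_lift:
  assumes "stp r s t"
  shows "(stp (r @ [k]))\<^sup>*\<^sup>* s t"
proof -
  let ?N = "length (cw r)" and ?l = "\<lambda>i. length (ww r i)"
  let ?R = "stp (r @ [k])"
  have N': "length (cw (r @ [k])) = ?N + ?l k" by (simp add: len_cw_snoc)
  from assms obtain i where st: "s \<le> ?N" "t \<le> ?N" and e: "t = s + ?l i \<or> s = t + ?l i"
    unfolding stp_def by blast
  show ?thesis
  proof (cases "i = k")
    case True
    then have "?R s t" using st e unfolding stp_def N' by (auto simp: len_ww_snoc)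
    then show ?thesis by blast
  next
    case False
    from e show ?thesis
    proof
      assume t: "t = s + ?l i"
      have 1: "?R s (s + ?l i + ?l k)" using st t False unfolding stp_def N'
        by (auto simp: len_ww_snoc intro!: exI[of _ i])
      have 2: "?R (s + ?l i + ?l k) t" using st t False unfolding stp_def N'
        by (auto simp: len_ww_snoc intro!: exI[of _ k])
      show ?thesis using 1 2 by (meson rtranclp.rtrancl_into_rtrancl rtranclp.rtrancl_refl)
    next
      assume s: "s = t + ?l i"
      have 1: "?R s (s + ?l k)" using st s False unfolding stp_def N'
        by (auto simp: len_ww_snoc intro!: exI[of _ k])
      have 2: "?R (s + ?l k) t" using st s False unfolding stp_def N'
        by (auto simp: len_ww_snoc intro!: exI[of _ i])
      show ?thesis using 1 2 by (meson rtranclp.rtrancl_into_rtrancl rtranclp.rtrancl_refl)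
    qed
  qed
qed

lemma conn: "s \<le> length (cw r) \<Longrightarrow> (stp r)\<^sup>*\<^sup>* 0 s"
proof (induction r arbitrary: s rule: rev_induct)
  case Nil then show ?case by simp
next
  case (snoc k r)
  let ?N = "length (cw r)" and ?l = "\<lambda>i. length (ww r i)"
  let ?R = "stp (r @ [k])"
  have lift: "(stp r)\<^sup>*\<^sup>* a b \<Longrightarrow> ?R\<^sup>*\<^sup>* a b" for a b
  proof (induction rule: rtranclp_induct)
    case (step y z) then show ?case using stp_lift[of r y z k] by (meson rtranclp_trans)
  qed simp
  show ?case
  proof (cases "s \<le> ?N")
    case True then show ?thesis using snoc lift by blast
  next
    case False
    have lk: "?l k \<le> ?N + 1" by (rule ww_le)
    have s': "s \<le> ?N + ?l k" using snoc.prems by (simp add: len_cw_snoc)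
    have "?R (s - ?l k) s"
      unfolding stp_def using False lk s' by (auto simp: len_cw_snoc len_ww_snoc intro!: exI[of _ k])
    moreover have "?R\<^sup>*\<^sup>* 0 (s - ?l k)" using snoc.IH[of "s - ?l k"] lift False s' by simp
    ultimately show ?thesis by simp
  qed
qed



lemma to_real_add: "to_real (x + y) = to_real x + to_real y"
  by (simp add: to_real_def vec_eq_iff)
lemma to_real_unitv: "to_real (unitv k) = axis k 1"
  by (simp add: to_real_def vec_eq_iff unitv_nth axis_def)

lemma adj_unit1: "adjacent x (x + unitv k)"
  unfolding adjacent_def dist_norm to_real_add to_real_unitv by simp

lemma adj_unit2: "adjacent (x + unitv k) x"
  unfolding adjacent_def dist_norm to_real_add to_real_unitv by simp

lemma int_sq_sum_one:
  fixes d :: "int ^ 'n::finite"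
  assumes S: "(\<Sum>i\<in>UNIV. (d $ i)^2) = 1"
  shows "\<exists>k. d = unitv k \<or> d = - unitv k"
proof -
  have "\<exists>i. d $ i \<noteq> 0"
  proof (rule ccontr)
    assume "\<not> (\<exists>i. d $ i \<noteq> 0)"
    then have "(\<Sum>i\<in>UNIV. (d $ i)^2) = 0" by simp
    then show False using S by simp
  qed
  then obtain i where i: "d $ i \<noteq> 0" by blast
  have others: "d $ i' = 0" if "i' \<noteq> i" for i'
  proof (rule ccontr)
    assume "d $ i' \<noteq> 0"
    have "(\<Sum>b\<in>{i, i'}. (d $ b)^2) \<le> (\<Sum>b\<in>UNIV. (d $ b)^2)"
      by (rule sum_mono2) auto
    moreover have "(\<Sum>b\<in>{i, i'}. (d $ b)^2) = (d $ i)^2 + (d $ i')^2" using that by simp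
    moreover have "(d $ i)^2 \<ge> 1" "(d $ i')^2 \<ge> 1"
      using i \<open>d $ i' \<noteq> 0\<close> by (simp_all add: power2_eq_square int_one_le_iff_zero_less zero_less_mult_iff linorder_neq_iff)
        (metis zero_less_mult_iff linorder_neq_iff int_one_le_iff_zero_less)+
    ultimately show False using S by simp
  qed
  have "(\<Sum>b\<in>UNIV. (d $ b)^2) = (\<Sum>b\<in>UNIV. if b = i then (d $ i)^2 else 0)"
    by (rule sum.cong) (auto simp: others)
  then have "(d $ i)^2 = 1" using S by simp
  then have "d $ i = 1 \<or> d $ i = -1" by (simp add: power2_eq_1_iff)
  then show ?thesis
  proof
    assume "d $ i = 1"
    then have "d = unitv i" by (auto simp: vec_eq_iff unitv_nth others)
    then show ?thesis by blast
  next
    assume "d $ i = -1"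
    then have "d = - unitv i" by (auto simp: vec_eq_iff unitv_nth others)
    then show ?thesis by blast
  qed
qed

lemma adj_cases:
  assumes "adjacent x y"
  shows "\<exists>k. y = x + unitv k \<or> y = x - unitv k"
proof -
  define d where "d = y - x"
  have "norm (to_real d) = 1"
    using assms unfolding adjacent_def dist_norm d_def
    by (metis add_diff_cancel_left' diff_add_cancel norm_minus_commute to_real_add)
  then have "sqrt (\<Sum>i\<in>UNIV. (real_of_int (d $ i))^2) = 1"
    by (simp add: norm_vec_def L2_set_def to_real_def)
  then have "(\<Sum>i\<in>UNIV. (real_of_int (d $ i))^2) = 1"
    by (metis real_sqrt_eq_1_iff)
  then have "real_of_int (\<Sum>i\<in>UNIV. (d $ i)^2) = 1" by simp
  then have "(\<Sum>i\<in>UNIV. (d $ i)^2) = 1" by linarith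
  then obtain k where "d = unitv k \<or> d = - unitv k" using int_sq_sum_one by blast
  then show ?thesis unfolding d_def by (metis add_diff_cancel_left' diff_add_cancel diff_minus_eq_add minus_diff_eq)
qed



lemma rtranclp_map:
  assumes "R\<^sup>*\<^sup>* a b" "\<And>x y. R x y \<Longrightarrow> E (f x) (f y)"
  shows "E\<^sup>*\<^sup>* (f a) (f b)"
  using assms(1)
proof (induction rule: rtranclp_induct)
  case (step y z) then show ?case using assms(2) by (meson rtranclp.rtrancl_into_rtrancl)
qed simp

lemma main_r:
  "BR r = Comp0 {x. \<forall>i. 0 \<le> (Mi r *v x) $ i \<and> (Mi r *v x) $ i \<le> uR r $ i}"
proof -
  define X where "X = {x. \<forall>i. 0 \<le> (Mi r *v x) $ i \<and> (Mi r *v x) $ i \<le> uR r $ i}"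
  define c where "c = cw r"
  define N where "N = length c"
  define xs where "xs s = lin r (par (take s c))" for s
  define E where "E = (\<lambda>a b. a \<in> X \<and> b \<in> X \<and> adjacent a b)"
  have B: "BR r = {xs s | s. s \<le> N}"
    unfolding BR_eq PY_def xs_def N_def c_def by blast
  have M: "Mi r *v xs s = par (take s c)" for s by (simp add: xs_def Mi_lin)
  have u: "uR r = par c" by (simp add: c_def par_cw)
  have inX: "xs s \<in> X" for s
  proof -
    have "par c = par (take s c) + par (drop s c)"
      by (metis append_take_drop_id par_append)
    then show ?thesis unfolding X_def u
      using par_nonneg[of "take s c"] par_nonneg[of "drop s c"] M[of s] by (simp add: add_increasing2)
  qed
  have nuX: "0 \<le> nu (Mi r *v x) \<and> nu (Mi r *v x) \<le> int N" if "x \<in> X" for x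
  proof -
    have "nu (Mi r *v x) \<le> nu (uR r)" using that unfolding X_def by (intro nu_mono) auto
    moreover have "0 \<le> nu (Mi r *v x)" using that unfolding X_def by (intro nu_nonneg) auto
    ultimately show ?thesis by (simp add: u N_def)
  qed
  have nuxs: "nu (Mi r *v xs s) = int (min s N)" for s by (simp add: M N_def)
  have Mu: "Mi r *v unitv k = par (ww r k)" for k by (simp add: par_ww)
  have stepx: "xs (s + length (ww r k)) = xs s + unitv k" if "s + length (ww r k) \<le> N" for s k
  proof -
    have "par (take (s + length (ww r k)) c) = par (take s c) + par (ww r k)"
      using cw_window that by (simp add: c_def N_def)
    then show ?thesis by (simp add: xs_def par_ww lin_Mi)
  qed
  have xs0: "xs 0 = 0" by (simp add: xs_def)
  have zeroX: "0 \<in> X" using inX[of 0] xs0 by simp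
  have sub1: "y \<in> BR r" if "E\<^sup>*\<^sup>* 0 y" for y
    using that
  proof (induction rule: rtranclp_induct)
    case base
    then show ?case using B xs0 by force
  next
    case (step y z)
    then obtain s where s: "s \<le> N" "y = xs s" using B by auto
    from step have zX: "z \<in> X" and adj: "adjacent y z" by (auto simp: E_def)
    from adj_cases[OF adj] obtain k where "z = y + unitv k \<or> z = y - unitv k" by blast
    then show ?case
    proof
      assume z: "z = y + unitv k"
      have "Mi r *v z = par (take s c) + par (ww r k)"
        using z s M by (simp add: matrix_vector_right_distrib par_ww)
      then have "nu (Mi r *v z) = int s + int (length (ww r k))" using s by (simp add: N_def)
      then have le: "s + length (ww r k) \<le> N" using nuX[OF zX] by simp
      then have "z = xs (s + length (ww r k))" using stepx z s by simp
      then show ?thesis using B le by blast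
    next
      assume z: "z = y - unitv k"
      have "Mi r *v z = par (take s c) - par (ww r k)"
        using z s M by (simp add: matrix_vector_mult_diff_distrib par_ww)
      then have "nu (Mi r *v z) = int s - int (length (ww r k))" using s by (simp add: N_def)
      then have le: "length (ww r k) \<le> s" using nuX[OF zX] by simp
      define s' where "s' = s - length (ww r k)"
      have ss: "s' + length (ww r k) = s" using le by (simp add: s'_def)
      have "s' + length (ww r k) \<le> N" using ss s by simp
      from stepx[OF this] have "xs (s' + length (ww r k)) = xs s' + unitv k" .
      then have "xs s = xs s' + unitv k" using ss by simp
      then have "z = xs s'" using z s by simp
      then show ?thesis using B s by (auto simp: s'_def)
    qed
  qed
  have sub2: "E\<^sup>*\<^sup>* 0 (xs s)" if "s \<le> N" for s
  proof -
    have "(stp r)\<^sup>*\<^sup>* 0 s" using conn that by (simp add: N_def c_def)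
    moreover have "E (xs a) (xs b)" if "stp r a b" for a b
    proof -
      from that obtain k where ab: "a \<le> N" "b \<le> N" "b = a + length (ww r k) \<or> a = b + length (ww r k)"
        unfolding stp_def N_def c_def by blast
      then have "xs b = xs a + unitv k \<or> xs a = xs b + unitv k" using stepx by auto
      then have "adjacent (xs a) (xs b)" using adj_unit1 adj_unit2 by metis
      then show ?thesis using inX by (simp add: E_def)
    qed
    ultimately show ?thesis using rtranclp_map[of "stp r" 0 s E xs] xs0 by simp
  qed
  have "Comp0 X = {y. E\<^sup>*\<^sup>* 0 y}" unfolding Comp0_def E_def using zeroX by simp
  then have "BR r = Comp0 X" using sub1 sub2 B by auto
  then show ?thesis by (simp add: X_def)
qed

theorem corollary3p6:
  fixes w :: "'n::finite list"
  shows "Bw w = Comp0 (Xw w)"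
  unfolding Bw_def Xw_eq by (rule main_r)


end
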